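(* For an integer $n\geq 1$ and non-negative integers $j_1,\ldots,j_n$ with $j_1,j_n\geq 1$, \[\sum_{k=0}^n(-1)^k\,\zeta^{1/2}(2j_1+1,\ldots,2j_k+1)\,\zeta^{1/2}(2j_n+1,2j_{n-1}+1,\ldots,2j_{k+1}+1)=0,\] where $\zeta^{1/2}$ of the empty index is $1$.
   Context: For integers $k_1\geq 2$, $k_2,\ldots,k_n\geq 1$, $\zeta(k_1,\ldots,k_n)=\sum_{m_1>\cdots>m_n>0}m_1^{-k_1}\cdots m_n^{-k_n}$. Let $\mathbf{p}$ run over all indices of the form $(k_1\square k_2\square\cdots\square k_n)$ where each $\square$ is a comma or a plus sign, and $\sigma(\mathbf{p})$ the number of plus signs; define $\zeta^t(k_1,\ldots,k_n)=\sum_{\mathbf{p}}t^{\sigma(\mathbf{p})}\zeta(\mathbf{p})$ and $\zeta^{1/2}$ its value at $t=1/2$. *)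

theory Defs
  imports "HOL-Analysis.Analysis"
begin

text \<open>For the empty index the sum is over the singleton set containing the empty list, giving 1.\<close>

definition mzv_range :: "nat list \<Rightarrow> nat list set" where
  "mzv_range ks = {ms. length ms = length ks \<and> sorted_wrt (>) ms \<and> (\<forall>m\<in>set ms. 0 < m)}"

definition mzv :: "nat list \<Rightarrow> real" where
  "mzv ks = (\<Sum>\<^sub>\<infinity> ms \<in> mzv_range ks.
              prod_list (map2 (\<lambda>m k. 1 / (real m ^ k)) ms ks))"

text \<open>All indices obtained from (k_1 [] k_2 [] ... [] k_n) by choosing each box to be a comma
  or a plus sign, paired with the number of plus signs used.\<close>

fun merges :: "nat list \<Rightarrow> (nat list \<times> nat) list" where
  "merges [] = [([], 0)]"
| "merges [k] = [([k], 0)]"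
| "merges (k # l # rest) =
     map (\<lambda>(p, s). (k # p, s)) (merges (l # rest)) @
     map (\<lambda>(p, s). (case p of [] \<Rightarrow> ([k], s + 1) | h # q \<Rightarrow> ((k + h) # q, s + 1)))
         (merges (l # rest))"

definition zeta_t :: "real \<Rightarrow> nat list \<Rightarrow> real" where
  "zeta_t t ks = sum_list (map (\<lambda>(p, s). t ^ s * mzv p) (merges ks))"

definition zeta_half :: "nat list \<Rightarrow> real" where
  "zeta_half ks = zeta_t (1/2) ks"

end

theory Submission
  imports Defs
begin



definition LL :: "nat \<Rightarrow> nat \<Rightarrow> nat list set" where
  "LL N r = {xs. set xs \<subseteq> {1..N} \<and> length xs = r}"
definition pw :: "nat list \<Rightarrow> nat list \<Rightarrow> real" where
  "pw ks ms = (\<Prod>i<length ks. 1 / real (ms!i) ^ (ks!i))"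
definition lk :: "(nat \<Rightarrow> nat \<Rightarrow> real) \<Rightarrow> nat list \<Rightarrow> real" where
  "lk X ms = (\<Prod>i<length ms - 1. X (ms!i) (ms!Suc i))"
definition TT :: "nat \<Rightarrow> (nat \<Rightarrow> nat \<Rightarrow> real) \<Rightarrow> nat list \<Rightarrow> real" where
  "TT N X ks = (\<Sum>ms\<in>LL N (length ks). pw ks ms * lk X ms)"
definition PP :: "nat \<Rightarrow> (nat \<Rightarrow> nat \<Rightarrow> real) \<Rightarrow> nat list \<Rightarrow> nat \<Rightarrow> real" where
  "PP N X ks m = (\<Sum>ms\<in>LL N (length ks - 1). pw ks (m#ms) * lk X (m#ms))"
definition Sr :: "nat \<Rightarrow> nat \<Rightarrow> real" where
  "Sr a b = (if a > b then 1 else 0)"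
definition Fh :: "nat \<Rightarrow> nat \<Rightarrow> real" where
  "Fh a b = (if a > b then 1 else if a = b then 1/2 else 0)"
definition Gh :: "nat \<Rightarrow> nat \<Rightarrow> real" where
  "Gh a b = Fh b a"

lemma finite_LL[simp]: "finite (LL N r)"
  unfolding LL_def by (rule finite_lists_length_eq) simp

lemma LL_0[simp]: "LL N 0 = {[]}"
  unfolding LL_def by auto

lemma LL_Suc: "LL N (Suc r) = (\<lambda>(xs, n). n#xs) ` (LL N r \<times> {1..N})"
  unfolding LL_def by (rule lists_length_Suc_eq)

lemma sum_LL_Suc: "(\<Sum>ms\<in>LL N (Suc r). f ms) = (\<Sum>m\<in>{1..N}. \<Sum>ms\<in>LL N r. f (m#ms))"
proof -
  have "(\<Sum>ms\<in>LL N (Suc r). f ms) = (\<Sum>(xs,n)\<in>LL N r \<times> {1..N}. f (n # xs))"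
    unfolding LL_Suc by (subst sum.reindex) (auto simp: inj_on_def case_prod_beta)
  also have "\<dots> = (\<Sum>ms\<in>LL N r. \<Sum>m\<in>{1..N}. f (m#ms))"
    by (rule sum.cartesian_product[symmetric])
  also have "\<dots> = (\<Sum>m\<in>{1..N}. \<Sum>ms\<in>LL N r. f (m#ms))"
    by (rule sum.swap)
  finally show ?thesis .
qed

lemma pw_Cons: "pw (k#ks) (m#ms) = 1 / real m ^ k * pw ks ms"
  unfolding pw_def by (simp add: prod.lessThan_Suc_shift del: prod.lessThan_Suc)

lemma pw_Nil[simp]: "pw [] ms = 1"
  unfolding pw_def by simp

lemma lk_Cons2: "lk X (m#m'#ms) = X m m' * lk X (m'#ms)"
  unfolding lk_def by (simp add: prod.lessThan_Suc_shift del: prod.lessThan_Suc)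

lemma lk_single[simp]: "lk X [m] = 1"
  unfolding lk_def by simp

lemma lk_Nil[simp]: "lk X [] = 1"
  unfolding lk_def by simp

lemma TT_PP: "ks \<noteq> [] \<Longrightarrow> TT N X ks = (\<Sum>m\<in>{1..N}. PP N X ks m)"
  unfolding TT_def PP_def by (cases ks) (simp_all add: sum_LL_Suc)

lemma PP_single: "PP N X [k] m = 1 / real m ^ k"
  unfolding PP_def by (simp add: pw_Cons)

lemma PP_Cons2: "PP N X (k#l#rest) m =
   1 / real m ^ k * (\<Sum>m'\<in>{1..N}. X m m' * PP N X (l#rest) m')"
proof -
  have "PP N X (k#l#rest) m = (\<Sum>ms\<in>LL N (Suc (length rest)). pw (k#l#rest) (m#ms) * lk X (m#ms))"
    unfolding PP_def by simp
  also have "\<dots> = (\<Sum>m'\<in>{1..N}. \<Sum>ms\<in>LL N (length rest). pw (k#l#rest) (m#m'#ms) * lk X (m#m'#ms))"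
    by (rule sum_LL_Suc)
  also have "\<dots> = (\<Sum>m'\<in>{1..N}. 1 / real m ^ k * (X m m' * PP N X (l#rest) m'))"
    unfolding PP_def by (simp add: pw_Cons lk_Cons2 sum_distrib_left mult_ac)
  finally show ?thesis by (simp add: sum_distrib_left)
qed

lemma PP_merge: "PP N X ((k+h)#q) m = 1 / real m ^ k * PP N X (h#q) m"
  unfolding PP_def by (simp add: pw_Cons sum_distrib_left power_add mult_ac)




lemma merges_props:
  "(p,s) \<in> set (merges ks) \<Longrightarrow>
     (ks = [] \<longrightarrow> p = []) \<and> (ks \<noteq> [] \<longrightarrow> p \<noteq> [] \<and> hd ks \<le> hd p) \<and>
     ((\<forall>x\<in>set ks. x \<ge> 1) \<longrightarrow> (\<forall>x\<in>set p. x \<ge> 1))"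
proof (induction ks arbitrary: p s rule: merges.induct)
  case 1 then show ?case by simp
next
  case (2 k) then show ?case by simp
next
  case (3 k l rest)
  have IH: "p \<noteq> [] \<and> l \<le> hd p \<and> ((\<forall>x\<in>set (l#rest). x \<ge> 1) \<longrightarrow> (\<forall>x\<in>set p. x \<ge> 1))"
    if "(p,s) \<in> set (merges (l#rest))" for p s
  proof -
    have "(l # rest \<noteq> [] \<longrightarrow> p \<noteq> [] \<and> hd (l#rest) \<le> hd p) \<and>
      ((\<forall>x\<in>set (l#rest). x \<ge> 1) \<longrightarrow> (\<forall>x\<in>set p. x \<ge> 1))"
      using "3.IH"(1)[OF that] by blast
    moreover have "l # rest \<noteq> []" by simp
    ultimately show ?thesis by (simp only: list.sel(1)) blast
  qed
  from "3.prems"(1) obtain p' s' where ps': "(p',s') \<in> set (merges (l#rest))" and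
    alt: "(p,s) = (k#p',s') \<or> (p,s) = (case p' of [] \<Rightarrow> ([k], s' + 1) | h # q \<Rightarrow> ((k + h) # q, s' + 1))"
    unfolding merges.simps(3) set_append set_map by fastforce
  from IH[OF ps'] obtain h q where hq: "p' = h#q" by (cases p') auto
  have disj: "p = k#p' \<or> p = (k+h)#q"
    using alt unfolding hq list.case prod.inject by blast
  have hp: "p \<noteq> [] \<and> k \<le> hd p" using disj by auto
  have sp: "(\<forall>x\<in>set (k#l#rest). x \<ge> 1) \<longrightarrow> (\<forall>x\<in>set p. x \<ge> 1)"
  proof
    assume a: "\<forall>x\<in>set (k#l#rest). x \<ge> 1"
    have k1: "k \<ge> 1" using a by simp
    have rest1: "\<forall>x\<in>set (l#rest). x \<ge> 1" using a by simp
    then have p'1: "\<forall>x\<in>set p'. x \<ge> 1" using IH[OF ps'] by blast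
    then have q1: "\<forall>x\<in>set q. x \<ge> 1" unfolding hq by simp
    show "\<forall>x\<in>set p. x \<ge> 1" using disj
    proof
      assume "p = k#p'" then show ?thesis using k1 p'1 by simp
    next
      assume "p = (k+h)#q" then show ?thesis using k1 q1 by simp
    qed
  qed
  have ne: "k#l#rest \<noteq> []" by simp
  show ?case using hp sp ne by (simp only: list.sel(1)) blast
qed

lemma sum_list_sum_swap:
  "sum_list (map (\<lambda>x. \<Sum>y\<in>A. g x y) xs) = (\<Sum>y\<in>A. sum_list (map (\<lambda>x. g x y) xs))"
  by (induct xs) (simp_all add: sum.distrib)

lemma sum_list_cmult:
  "sum_list (map (\<lambda>x. c * f x) xs) = (c::real) * sum_list (map f xs)"
  by (induct xs) (simp_all add: algebra_simps)

lemma Fh_split: "Fh a b = Sr a b + (if b = a then 1/2 else 0)"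
  unfolding Fh_def Sr_def by auto

lemma merges_PP:
  "ks \<noteq> [] \<Longrightarrow> m \<in> {1..N} \<Longrightarrow>
   sum_list (map (\<lambda>(p,s). (1/2)^s * PP N Sr p m) (merges ks)) = PP N Fh ks m"
proof (induction ks arbitrary: m rule: merges.induct)
  case 1 then show ?case by simp
next
  case (2 k) then show ?case by (simp add: PP_single)
next
  case (3 k l rest)
  define M where "M = merges (l#rest)"
  define c where "c = 1 / real m ^ k"
  define g where "g = (\<lambda>m'. sum_list (map (\<lambda>(p,s). (1/2::real)^s * PP N Sr p m') M))"
  have IH: "\<And>m'. m' \<in> {1..N} \<Longrightarrow> g m' = PP N Fh (l#rest) m'"
    using "3.IH"(1) unfolding g_def M_def by simp
  have ne: "\<And>p s. (p,s) \<in> set M \<Longrightarrow> p \<noteq> []"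
    using merges_props unfolding M_def by fastforce
  have e1: "sum_list (map (\<lambda>(p,s). (1/2)^s * PP N Sr p m) (map (\<lambda>(p, s). (k # p, s)) M))
      = sum_list (map (\<lambda>x. c * (\<Sum>m'\<in>{1..N}. Sr m m' * ((\<lambda>(p,s). (1/2)^s * PP N Sr p m') x))) M)"
  proof -
    have H: "\<And>x. x \<in> set M \<Longrightarrow> ((\<lambda>(p,s). (1/2)^s * PP N Sr p m) \<circ> (\<lambda>(p, s). (k # p, s))) x
        = c * (\<Sum>m'\<in>{1..N}. Sr m m' * ((\<lambda>(p,s). (1/2)^s * PP N Sr p m') x))"
    proof -
      fix x assume x: "x \<in> set M"
      obtain p s where xps: "x = (p,s)" by force
      with ne x obtain h q where hq: "p = h#q" by (cases p) auto
      have e: "PP N Sr (k#p) m = c * (\<Sum>m'\<in>{1..N}. Sr m m' * PP N Sr p m')"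
        unfolding hq by (simp only: PP_Cons2 c_def)
      show "?thesis x" using xps
        by (simp add: e sum_distrib_left mult_ac)
    qed
    show ?thesis unfolding map_map
      by (rule arg_cong[where f=sum_list], rule map_cong[OF refl], rule H, assumption)
  qed
  have e2: "sum_list (map (\<lambda>(p,s). (1/2)^s * PP N Sr p m)
       (map (\<lambda>(p, s). case p of [] \<Rightarrow> ([k], s + 1) | h # q \<Rightarrow> ((k + h) # q, s + 1)) M))
      = sum_list (map (\<lambda>x. (c * (1/2)) * ((\<lambda>(p,s). (1/2)^s * PP N Sr p m) x)) M)"
  proof -
    have H: "\<And>x. x \<in> set M \<Longrightarrow> ((\<lambda>(p,s). (1/2)^s * PP N Sr p m) \<circ>
         (\<lambda>(p, s). case p of [] \<Rightarrow> ([k], s + 1) | h # q \<Rightarrow> ((k + h) # q, s + 1))) x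
        = (c * (1/2)) * ((\<lambda>(p,s). (1/2)^s * PP N Sr p m) x)"
    proof -
      fix x assume x: "x \<in> set M"
      obtain p s where xps: "x = (p,s)" by force
      with ne x obtain h q where "p = h#q" by (cases p) auto
      then show "?thesis x" using xps
        by (simp add: PP_merge mult_ac c_def)
    qed
    show ?thesis unfolding map_map
      by (rule arg_cong[where f=sum_list], rule map_cong[OF refl], rule H, assumption)
  qed
  have "sum_list (map (\<lambda>(p,s). (1/2)^s * PP N Sr p m) (merges (k#l#rest)))
     = c * (\<Sum>m'\<in>{1..N}. Sr m m' * g m') + (c * (1/2)) * g m"
    unfolding merges.simps(3) M_def[symmetric] map_append sum_list_append e1 e2
    by (simp only: sum_list_cmult sum_list_sum_swap g_def)
  also have "\<dots> = c * (\<Sum>m'\<in>{1..N}. Fh m m' * g m')"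
  proof -
    have "(\<Sum>m'\<in>{1..N}. Fh m m' * g m') = (\<Sum>m'\<in>{1..N}. Sr m m' * g m')
        + (\<Sum>m'\<in>{1..N}. if m' = m then (1/2) * g m' else 0)"
      unfolding sum.distrib[symmetric] by (rule sum.cong) (auto simp: Fh_split Sr_def algebra_simps)
    also have "(\<Sum>m'\<in>{1..N}. if m' = m then (1/2) * g m' else 0) = (1/2) * g m"
      using "3.prems"(2) by (subst sum.delta) auto
    finally show ?thesis by (simp add: algebra_simps)
  qed
  also have "\<dots> = c * (\<Sum>m'\<in>{1..N}. Fh m m' * PP N Fh (l#rest) m')"
    by (rule arg_cong[where f="\<lambda>x. c * x"], rule sum.cong) (simp_all add: IH)
  also have "\<dots> = PP N Fh (k#l#rest) m"
    by (simp only: PP_Cons2 c_def)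
  finally show ?case .
qed

lemma merges_TT:
  "sum_list (map (\<lambda>(p,s). (1/2)^s * TT N Sr p) (merges ks)) = TT N Fh ks"
proof (cases "ks = []")
  case True then show ?thesis by (simp add: TT_def)
next
  case False
  have ne: "\<And>p s. (p,s) \<in> set (merges ks) \<Longrightarrow> p \<noteq> []"
    using merges_props False by fastforce
  have "sum_list (map (\<lambda>(p,s). (1/2)^s * TT N Sr p) (merges ks))
      = sum_list (map (\<lambda>x. \<Sum>m\<in>{1..N}. (\<lambda>(p,s). (1/2)^s * PP N Sr p m) x) (merges ks))"
    by (rule arg_cong[where f=sum_list], rule map_cong)
       (auto simp: TT_PP ne sum_distrib_left)
  also have "\<dots> = TT N Fh ks"
    by (simp add: sum_list_sum_swap merges_PP False TT_PP )
  finally show ?thesis .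
qed




lemma alt_telescope:
  fixes x :: "nat \<Rightarrow> real"
  shows "(\<Sum>k=0..Suc m. (-1)^k * (\<Prod>i<k-1. x i) * (\<Prod>i\<in>{k..<m}. 1 - x i)) = 0"
proof (induction m)
  case 0 then show ?case by simp
next
  case (Suc m)
  define P where "P = (\<Prod>i<m. x i)"
  have split1: "(\<Sum>k=0..Suc (Suc m). (-1)^k * (\<Prod>i<k-1. x i) * (\<Prod>i\<in>{k..<Suc m}. 1 - x i))
      = (\<Sum>k=0..m. (-1)^k * (\<Prod>i<k-1. x i) * (\<Prod>i\<in>{k..<Suc m}. 1 - x i))
        + (-1)^(Suc m) * P + (-1)^(Suc (Suc m)) * (P * x m)"
    by (simp add: P_def)
  have split2: "(\<Sum>k=0..m. (-1)^k * (\<Prod>i<k-1. x i) * (\<Prod>i\<in>{k..<Suc m}. 1 - x i))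
      = (1 - x m) * (\<Sum>k=0..m. (-1)^k * (\<Prod>i<k-1. x i) * (\<Prod>i\<in>{k..<m}. 1 - x i))"
    unfolding sum_distrib_left
    by (rule sum.cong) (simp_all add: prod.atLeastLessThan_Suc)
  have ih: "(\<Sum>k=0..m. (-1)^k * (\<Prod>i<k-1. x i) * (\<Prod>i\<in>{k..<m}. 1 - x i)) = - ((-1)^(Suc m) * P)"
    using Suc.IH by (simp add: P_def)
  show ?case unfolding split1 split2 ih by (simp add: algebra_simps)
qed

lemma prod_shift: "(k::nat) \<le> n \<Longrightarrow> (\<Prod>i\<in>{k..<n}. g i) = (\<Prod>j<n-k. g (k+j))"
  by (rule prod.reindex_bij_witness[of _ "\<lambda>b. k + b" "\<lambda>a. a - k"]) (auto simp: le_add_diff_inverse)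

lemma LL_length: "ms \<in> LL N r \<Longrightarrow> length ms = r"
  unfolding LL_def by simp

lemma pw_rev: "length ms = length ks \<Longrightarrow> pw (rev ks) (rev ms) = pw ks ms"
proof -
  assume l: "length ms = length ks"
  have "pw (rev ks) (rev ms) = (\<Prod>i<length ks. 1 / real (ms ! (length ks - Suc i)) ^ (ks ! (length ks - Suc i)))"
    unfolding pw_def using l by (intro prod.cong) (auto simp: rev_nth)
  also have "\<dots> = pw ks ms"
    unfolding pw_def by (rule prod.nat_diff_reindex)
  finally show ?thesis .
qed

lemma lk_rev: "lk Fh (rev ms) = lk Gh ms"
proof -
  define n where "n = length ms - 1"
  have "lk Fh (rev ms) = (\<Prod>i<n. Gh (ms ! (n - Suc i)) (ms ! Suc (n - Suc i)))"
    unfolding lk_def n_def[symmetric] length_rev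
  proof (intro prod.cong refl)
    fix i assume i: "i \<in> {..<n}"
    then have "rev ms ! i = ms ! Suc (n - Suc i)" "rev ms ! Suc i = ms ! (n - Suc i)"
      by (auto simp: rev_nth n_def Suc_diff_Suc)
    then show "Fh (rev ms ! i) (rev ms ! Suc i) = Gh (ms ! (n - Suc i)) (ms ! Suc (n - Suc i))"
      by (simp add: Gh_def)
  qed
  also have "\<dots> = lk Gh ms"
    unfolding lk_def n_def[symmetric] by (rule prod.nat_diff_reindex)
  finally show ?thesis .
qed

lemma TT_rev: "TT N Fh (rev ks) = TT N Gh ks"
  unfolding TT_def length_rev
proof (rule sum.reindex_bij_witness[of _ rev rev])
  fix a assume "a \<in> LL N (length ks)"
  then have l: "length (rev a) = length ks" by (simp add: LL_def)
  show "pw ks (rev a) * lk Gh (rev a) = pw (rev ks) a * lk Fh a"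
    using pw_rev[OF l] lk_rev[of "rev a"] by simp
qed (auto simp: LL_def)

lemma TT_split:
  assumes "length as = n" "k \<le> n"
  shows "TT N Fh (take k as) * TT N Gh (drop k as) =
    (\<Sum>ms\<in>LL N n. pw as ms * (\<Prod>i<k-1. Fh (ms!i) (ms!Suc i)) * (\<Prod>i\<in>{k..<n-1}. Gh (ms!i) (ms!Suc i)))"
proof -
  have lt: "length (take k as) = k" and ld: "length (drop k as) = n - k" using assms by auto
  have "TT N Fh (take k as) * TT N Gh (drop k as) =
     (\<Sum>(u,v)\<in>LL N k \<times> LL N (n-k). (pw (take k as) u * lk Fh u) * (pw (drop k as) v * lk Gh v))"
    unfolding TT_def lt ld sum_product sum.cartesian_product by simp
  also have "\<dots> = (\<Sum>ms\<in>LL N n. pw as ms * (\<Prod>i<k-1. Fh (ms!i) (ms!Suc i)) * (\<Prod>i\<in>{k..<n-1}. Gh (ms!i) (ms!Suc i)))"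
  proof -
    have key: "pw as (u@v) * (\<Prod>i<k-1. Fh ((u@v)!i) ((u@v)!Suc i)) * (\<Prod>i\<in>{k..<n-1}. Gh ((u@v)!i) ((u@v)!Suc i))
       = pw (take k as) u * lk Fh u * (pw (drop k as) v * lk Gh v)"
      if lu: "length u = k" and lv: "length v = n - k" for u v
    proof -
    have pw1: "pw as (u@v) = pw (take k as) u * pw (drop k as) v"
    proof -
      have "pw as (u@v) = (\<Prod>i\<in>{0..<k}. 1 / real ((u@v)!i) ^ (as!i)) * (\<Prod>i\<in>{k..<n}. 1 / real ((u@v)!i) ^ (as!i))"
        unfolding pw_def assms(1) using assms(2) by (simp add: prod.atLeastLessThan_concat atLeast0LessThan[symmetric])
      also have "(\<Prod>i\<in>{0..<k}. 1 / real ((u@v)!i) ^ (as!i)) = pw (take k as) u"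
        unfolding pw_def lt atLeast0LessThan by (rule prod.cong) (auto simp: nth_append lu)
      also have "(\<Prod>i\<in>{k..<n}. 1 / real ((u@v)!i) ^ (as!i)) = pw (drop k as) v"
        unfolding pw_def ld prod_shift[OF assms(2)] using assms by (intro prod.cong) (auto simp: nth_append lu nth_drop)
      finally show ?thesis .
    qed
    have lk1: "(\<Prod>i<k-1. Fh ((u@v)!i) ((u@v)!Suc i)) = lk Fh u"
      unfolding lk_def lu by (rule prod.cong) (auto simp: nth_append lu)
    have lk2: "(\<Prod>i\<in>{k..<n-1}. Gh ((u@v)!i) ((u@v)!Suc i)) = lk Gh v"
    proof (cases "k \<le> n - 1")
      case True
      show ?thesis unfolding lk_def lv prod_shift[OF True]
        by (rule prod.cong) (auto simp: nth_append lu)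
    next
      case False
      then have "n - k - 1 = 0" "n - 1 < k" by auto
      then show ?thesis unfolding lk_def lv by simp
    qed
    show ?thesis unfolding pw1 lk1 lk2 by (simp add: mult_ac)
    qed
    have key': "pw as (case a of (u, v) \<Rightarrow> u @ v) * (\<Prod>i<k-1. Fh ((case a of (u, v) \<Rightarrow> u @ v)!i) ((case a of (u, v) \<Rightarrow> u @ v)!Suc i))
       * (\<Prod>i\<in>{k..<n-1}. Gh ((case a of (u, v) \<Rightarrow> u @ v)!i) ((case a of (u, v) \<Rightarrow> u @ v)!Suc i))
       = (case a of (u,v) \<Rightarrow> pw (take k as) u * lk Fh u * (pw (drop k as) v * lk Gh v))"
      if "a \<in> LL N k \<times> LL N (n-k)" for a
    proof (cases a)
      case (Pair u v)
      with that have "length u = k" "length v = n - k" by (auto simp: LL_def)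
      then show ?thesis using key[of u v] Pair by simp
    qed
    show ?thesis
      apply (rule sum.reindex_bij_witness[of _ "\<lambda>ms. (take k ms, drop k ms)" "\<lambda>(u,v). u @ v"])
      prefer 5 apply (erule key')
      using assms by (auto simp: LL_def dest: in_set_takeD in_set_dropD)
  qed
  finally show ?thesis .
qed

lemma Gh_Fh: "Gh a b = 1 - Fh a b"
  unfolding Gh_def Fh_def by auto

lemma fin_main:
  assumes "length as = n" "n \<ge> 1"
  shows "(\<Sum>k=0..n. (-1)^k * (TT N Fh (take k as) * TT N Fh (rev (drop k as)))) = 0"
proof -
  have "(\<Sum>k=0..n. (-1)^k * (TT N Fh (take k as) * TT N Fh (rev (drop k as))))
     = (\<Sum>k=0..n. \<Sum>ms\<in>LL N n. pw as ms * ((-1)^k * (\<Prod>i<k-1. Fh (ms!i) (ms!Suc i)) * (\<Prod>i\<in>{k..<n-1}. 1 - Fh (ms!i) (ms!Suc i))))"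
    by (rule sum.cong[OF refl]) (simp add: TT_rev TT_split[OF assms(1)] sum_distrib_left Gh_Fh mult_ac)
  also have "\<dots> = (\<Sum>ms\<in>LL N n. pw as ms * (\<Sum>k=0..n. (-1)^k * (\<Prod>i<k-1. Fh (ms!i) (ms!Suc i)) * (\<Prod>i\<in>{k..<n-1}. 1 - Fh (ms!i) (ms!Suc i))))"
    by (subst sum.swap) (simp add: sum_distrib_left)
  also have "\<dots> = 0"
  proof (rule sum.neutral, rule ballI)
    fix ms
    obtain m where nm: "n = Suc m" using assms(2) by (cases n) auto
    have "(\<Sum>k=0..n. (-1)^k * (\<Prod>i<k-1. Fh (ms!i) (ms!Suc i)) * (\<Prod>i\<in>{k..<n-1}. 1 - Fh (ms!i) (ms!Suc i))) = 0"
      unfolding nm using alt_telescope[where m=m and x="\<lambda>i. Fh (ms!i) (ms!Suc i)"] by simp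
    then show "pw as ms * (\<Sum>k=0..n. (-1)^k * (\<Prod>i<k-1. Fh (ms!i) (ms!Suc i)) * (\<Prod>i\<in>{k..<n-1}. 1 - Fh (ms!i) (ms!Suc i))) = 0"
      by simp
  qed
  finally show ?thesis .
qed




lemma exhaust_limit:
  fixes f :: "'a \<Rightarrow> real"
  assumes nn: "\<And>x. x \<in> A \<Longrightarrow> f x \<ge> 0" and sm: "f summable_on A"
    and fin: "\<And>N. finite (B N)" and sub: "\<And>N. B N \<subseteq> A" and mono: "\<And>N. B N \<subseteq> B (Suc N)"
    and cover: "\<And>F. finite F \<Longrightarrow> F \<subseteq> A \<Longrightarrow> \<exists>N. F \<subseteq> B N"
  shows "(\<lambda>N. sum f (B N)) \<longlonglongrightarrow> infsum f A"
proof (rule LIMSEQ_I)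
  fix r :: real assume r: "0 < r"
  obtain F where F: "finite F" "F \<subseteq> A" "dist (sum f F) (infsum f A) \<le> r/2"
    using infsum_finite_approximation[OF sm, of "r/2"] r by auto
  obtain N0 where N0: "F \<subseteq> B N0" using cover F by blast
  have "\<forall>N\<ge>N0. norm (sum f (B N) - infsum f A) < r"
  proof (intro allI impI)
    fix N assume "N \<ge> N0"
    then have "B N0 \<subseteq> B N" using lift_Suc_mono_le[of B, OF mono] by blast
    with N0 have FB: "F \<subseteq> B N" by blast
    have up: "sum f (B N) \<le> infsum f A"
      by (rule finite_sum_le_infsum[OF sm fin sub]) (use nn in auto)
    have lo: "sum f F \<le> sum f (B N)"
      by (rule sum_mono2[OF fin FB]) (use nn sub in auto)
    from F(3) have "\<bar>sum f F - infsum f A\<bar> \<le> r/2" by (simp add: dist_real_def)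
    then have "infsum f A - sum f F \<le> r/2" by (simp only: abs_le_iff) linarith
    with up lo r show "norm (sum f (B N) - infsum f A) < r" by simp
  qed
  then show "\<exists>no. \<forall>n\<ge>no. norm (sum f (B n) - infsum f A) < r" by blast
qed

definition RR :: "nat \<Rightarrow> nat list \<Rightarrow> nat list set" where
  "RR N p = {ms \<in> mzv_range p. set ms \<subseteq> {1..N}}"

lemma term_pw: "length ms = length p \<Longrightarrow>
  prod_list (map2 (\<lambda>m k. 1 / (real m ^ k)) ms p) = pw p ms"
  by (induction ms p rule: list_induct2) (simp_all add: pw_Cons)

lemma lk_Sr: "lk Sr ms = (if sorted_wrt (>) ms then 1 else 0)"
proof (induction ms rule: induct_list012)
  case (3 x y zs)
  have tr: "transp ((>) :: nat \<Rightarrow> nat \<Rightarrow> bool)" by (auto simp: transp_def)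
  show ?case using 3 by (simp only: lk_Cons2 sorted_wrt2[OF tr]) (simp add: Sr_def)
qed simp_all

lemma RR_eq: "RR N p = {ms \<in> LL N (length p). sorted_wrt (>) ms}"
  unfolding RR_def mzv_range_def LL_def by auto

lemma TT_Sr_RR: "TT N Sr p = (\<Sum>ms\<in>RR N p. prod_list (map2 (\<lambda>m k. 1 / (real m ^ k)) ms p))"
proof -
  have "(\<Sum>ms\<in>RR N p. prod_list (map2 (\<lambda>m k. 1 / (real m ^ k)) ms p)) = (\<Sum>ms\<in>RR N p. pw p ms)"
    by (rule sum.cong) (auto simp: RR_eq LL_def term_pw)
  also have "\<dots> = TT N Sr p"
    unfolding RR_eq TT_def by (simp add: sum.inter_filter lk_Sr) (intro sum.cong refl; simp)
  finally show ?thesis by simp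
qed

lemma sum_LL_prod: "(\<Sum>ms\<in>LL N r. \<Prod>i<r. (g::nat\<Rightarrow>real) (ms!i)) = (\<Sum>m\<in>{1..N}. g m) ^ r"
proof (induction r)
  case 0 then show ?case by simp
next
  case (Suc r)
  have "(\<Sum>ms\<in>LL N (Suc r). \<Prod>i<Suc r. g (ms!i)) = (\<Sum>m\<in>{1..N}. \<Sum>ms\<in>LL N r. g m * (\<Prod>i<r. g (ms!i)))"
    unfolding sum_LL_Suc by (simp add: prod.lessThan_Suc_shift del: prod.lessThan_Suc)
  also have "\<dots> = (\<Sum>m\<in>{1..N}. g m) * (\<Sum>ms\<in>LL N r. \<Prod>i<r. g (ms!i))"
    unfolding sum_product by (simp add: sum_distrib_left)
  finally show ?case using Suc by simp
qed

lemma key_ineq: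
  fixes M :: real and x :: "nat \<Rightarrow> real" and r :: nat
  assumes r: "r \<ge> 1" and M: "M \<ge> 1" and x: "\<And>i. i \<in> {1..<r} \<Longrightarrow> 1 \<le> x i \<and> x i \<le> M"
  shows "1 / M^2 * (\<Prod>i\<in>{1..<r}. 1 / x i) \<le> M powr (-(1+1/r)) * (\<Prod>i\<in>{1..<r}. x i powr (-(1+1/r)))"
proof -
  define s where "s = 1 + 1 / real r"
  have Mpos: "M > 0" using M by simp
  have each: "1 / x i * M powr (-1/r) \<le> x i powr (-s)" if i: "i \<in> {1..<r}" for i
  proof -
    have xi: "1 \<le> x i" "x i \<le> M" using x[OF i] by auto
    have "x i powr (-s) = x i powr ((-1) + (-1/r))"
      unfolding s_def by (simp add: algebra_simps)
    also have "\<dots> = x i powr (-1) * x i powr (-1/r)" by (rule powr_add)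
    also have "x i powr (-1) = 1 / x i" using xi by (simp add: powr_minus_divide)
    finally have e: "x i powr (-s) = 1 / x i * x i powr (-1/r)" by simp
    have "M powr (-1/r) \<le> x i powr (-1/r)"
      by (rule powr_mono2') (use xi in auto)
    then show ?thesis unfolding e using xi by (intro mult_left_mono) auto
  qed
  have "(\<Prod>i\<in>{1..<r}. 1 / x i * M powr (-1/r)) \<le> (\<Prod>i\<in>{1..<r}. x i powr (-s))"
  proof (rule prod_mono, rule conjI)
    fix i assume i: "i \<in> {1..<r}"
    then have "x i > 0" using x[OF i] by linarith
    then show "0 \<le> 1 / x i * M powr (-1/r)" by (simp add: powr_ge_zero)
    show "1 / x i * M powr (-1/r) \<le> x i powr (-s)" by (rule each[OF i])
  qed
  moreover have "(\<Prod>i\<in>{1..<r}. 1 / x i * M powr (-1/r)) = (\<Prod>i\<in>{1..<r}. 1 / x i) * M powr (- (real r - 1) / r)"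
  proof -
    have "(\<Prod>i\<in>{1..<r}. 1 / x i * M powr (-1/r)) = (\<Prod>i\<in>{1..<r}. 1 / x i) * (M powr (-1/r)) ^ (r - 1)"
      by (simp only: prod.distrib prod_constant card_atLeastLessThan)
    also have "(M powr (-1/r)) ^ (r - 1) = M powr (of_nat (r-1) * (-1/r))"
      using Mpos by (simp add: powr_power)
    also have "of_nat (r-1) * (-1/real r) = - (real r - 1) / r"
      using r by (simp add: of_nat_diff field_simps)
    finally show ?thesis .
  qed
  ultimately have A: "(\<Prod>i\<in>{1..<r}. 1 / x i) * M powr (- (real r - 1) / r) \<le> (\<Prod>i\<in>{1..<r}. x i powr (-s))"
    by simp
  have B: "1 / M^2 = M powr (-s) * M powr (- (real r - 1) / r)"
  proof -
    have "M powr (-s) * M powr (- (real r - 1) / r) = M powr (-2)"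
      unfolding s_def powr_add[symmetric] using r by (simp add: field_simps)
    also have "\<dots> = 1 / M^2" using Mpos by (simp add: powr_minus_divide powr_realpow)
    finally show ?thesis by simp
  qed
  have "1 / M^2 * (\<Prod>i\<in>{1..<r}. 1 / x i) = M powr (-s) * ((\<Prod>i\<in>{1..<r}. 1 / x i) * M powr (- (real r - 1) / r))"
    unfolding B by (simp add: mult_ac)
  also have "\<dots> \<le> M powr (-s) * (\<Prod>i\<in>{1..<r}. x i powr (-s))"
    by (rule mult_left_mono[OF A]) simp
  finally show ?thesis unfolding s_def .
qed




definition good :: "nat list \<Rightarrow> bool" where
  "good p \<longleftrightarrow> p = [] \<or> (hd p \<ge> 2 \<and> (\<forall>x\<in>set p. x \<ge> 1))"

lemma pw_bound:
  assumes ne: "p \<noteq> []" and h2: "hd p \<ge> 2" and pos: "\<forall>x\<in>set p. x \<ge> 1"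
    and ms: "ms \<in> mzv_range p"
  shows "pw p ms \<le> (\<Prod>i<length p. real (ms!i) powr (-(1 + 1 / real (length p))))"
proof -
  define r where "r = length p"
  have r1: "r \<ge> 1" using ne by (simp add: r_def Suc_le_eq)
  have lms: "length ms = r" and srt: "sorted_wrt (>) ms" and mpos: "\<forall>m\<in>set ms. 0 < m"
    using ms by (auto simp: mzv_range_def r_def)
  define M where "M = real (ms!0)"
  define x where "x = (\<lambda>i. real (ms!i))"
  have x1: "1 \<le> x i" if "i < r" for i
    using mpos that lms by (auto simp: x_def Suc_le_eq)
  have M1: "1 \<le> M" using x1[of 0] r1 by (simp add: x_def M_def)
  have xM: "x i \<le> M" if "i \<in> {1..<r}" for i
    using sorted_wrt_nth_less[OF srt, of 0 i] that lms by (auto simp: x_def M_def)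
  have split: "{..<r} = insert 0 {1..<r}" using r1 by auto
  have "pw p ms = 1 / M ^ (p!0) * (\<Prod>i\<in>{1..<r}. 1 / x i ^ (p!i))"
    unfolding pw_def r_def[symmetric] split by (simp add: M_def x_def)
  also have "\<dots> \<le> 1 / M ^ 2 * (\<Prod>i\<in>{1..<r}. 1 / x i)"
  proof (rule mult_mono)
    have "p!0 \<ge> 2" using h2 ne by (simp add: hd_conv_nth)
    then have "M ^ 2 \<le> M ^ (p!0)" using M1 by (intro power_increasing) auto
    then show "1 / M ^ (p!0) \<le> 1 / M ^ 2" using M1 by (intro divide_left_mono) auto
    show "(\<Prod>i\<in>{1..<r}. 1 / x i ^ (p!i)) \<le> (\<Prod>i\<in>{1..<r}. 1 / x i)"
    proof (rule prod_mono, rule conjI)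
      fix i assume i: "i \<in> {1..<r}"
      have xi: "1 \<le> x i" using x1 i by auto
      have "p!i \<ge> 1" using pos i by (auto simp: r_def)
      then have "x i \<le> x i ^ (p!i)" using xi by (metis power_increasing power_one_right)
      then show "1 / x i ^ (p!i) \<le> 1 / x i" using xi by (intro divide_left_mono) auto
      show "0 \<le> 1 / x i ^ (p!i)" using xi by simp
    qed
    show "0 \<le> 1 / M ^ 2" by simp
    show "0 \<le> (\<Prod>i\<in>{1..<r}. 1 / x i ^ (p!i))"
    proof (rule prod_nonneg)
      fix i assume "i \<in> {1..<r}"
      then have "0 < x i" using x1[of i] by auto
      then show "0 \<le> 1 / x i ^ (p!i)" by simp
    qed
  qed
  also have "\<dots> \<le> M powr (-(1+1/r)) * (\<Prod>i\<in>{1..<r}. x i powr (-(1+1/r)))"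
    by (rule key_ineq[OF r1 M1]) (use x1 xM in auto)
  also have "\<dots> = (\<Prod>i<r. real (ms!i) powr (-(1 + 1 / real r)))"
    unfolding split by (simp add: M_def x_def)
  finally show ?thesis unfolding r_def .
qed

lemma RR_sub_LL: "RR N p \<subseteq> LL N (length p)"
  unfolding RR_eq by auto

lemma TT_Sr_bound:
  assumes ne: "p \<noteq> []" and h2: "hd p \<ge> 2" and pos: "\<forall>x\<in>set p. x \<ge> 1"
  shows "TT N Sr p \<le> (suminf (\<lambda>m. real m powr (-(1 + 1 / real (length p))))) ^ length p"
proof -
  define r where "r = length p"
  define g where "g = (\<lambda>m. real m powr (-(1 + 1 / real r)))"
  have gnn: "\<And>m. g m \<ge> 0" by (simp add: g_def powr_ge_zero)
  have sg: "summable g"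
    unfolding g_def using ne by (subst summable_real_powr_iff) (simp add: r_def)
  have "TT N Sr p = (\<Sum>ms\<in>RR N p. pw p ms)"
    unfolding TT_Sr_RR by (rule sum.cong) (auto simp: RR_eq LL_def term_pw)
  also have "\<dots> \<le> (\<Sum>ms\<in>RR N p. \<Prod>i<r. g (ms!i))"
    by (rule sum_mono, unfold g_def r_def, rule pw_bound[OF ne h2 pos]) (simp add: RR_def)
  also have "\<dots> \<le> (\<Sum>ms\<in>LL N r. \<Prod>i<r. g (ms!i))"
    by (rule sum_mono2) (use RR_sub_LL gnn in \<open>auto simp: r_def intro: prod_nonneg\<close>)
  also have "\<dots> = (\<Sum>m\<in>{1..N}. g m) ^ r" by (rule sum_LL_prod)
  also have "\<dots> \<le> (suminf g) ^ r"
    by (rule power_mono) (use sg gnn in \<open>auto intro: sum_le_suminf sum_nonneg\<close>)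
  finally show ?thesis unfolding g_def r_def .
qed

lemma cover_RR:
  assumes "finite F" "F \<subseteq> mzv_range p"
  shows "\<exists>N. F \<subseteq> RR N p"
proof -
  define N where "N = Max (insert 0 (\<Union>ms\<in>F. set ms))"
  have fin: "finite (insert 0 (\<Union>ms\<in>F. set ms))" using assms(1) by simp
  have "F \<subseteq> RR N p"
  proof
    fix ms assume ms: "ms \<in> F"
    then have "ms \<in> mzv_range p" using assms by auto
    moreover have "set ms \<subseteq> {1..N}"
    proof
      fix m assume m: "m \<in> set ms"
      then have "m \<le> N" unfolding N_def using ms fin by (intro Max_ge) auto
      moreover have "0 < m" using m \<open>ms \<in> mzv_range p\<close> by (auto simp: mzv_range_def)
      ultimately show "m \<in> {1..N}" by auto
    qed
    ultimately show "ms \<in> RR N p" by (simp add: RR_def)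
  qed
  then show ?thesis by blast
qed

lemma term_nonneg: "ms \<in> mzv_range p \<Longrightarrow> 0 \<le> prod_list (map2 (\<lambda>m k. 1 / (real m ^ k)) ms p)"
  by (simp add: mzv_range_def term_pw pw_def prod_nonneg)

lemma mzv_limit:
  assumes "good p"
  shows "(\<lambda>N. TT N Sr p) \<longlonglongrightarrow> mzv p"
proof (cases "p = []")
  case True
  have r: "mzv_range [] = {[]}" by (auto simp: mzv_range_def)
  show ?thesis using True by (simp add: TT_def mzv_def r)
next
  case False
  with assms have h2: "hd p \<ge> 2" and pos: "\<forall>x\<in>set p. x \<ge> 1" by (auto simp: good_def)
  define f where "f = (\<lambda>ms. prod_list (map2 (\<lambda>m k. 1 / (real m ^ k)) ms p))"
  have nn: "\<And>ms. ms \<in> mzv_range p \<Longrightarrow> f ms \<ge> 0" unfolding f_def by (rule term_nonneg)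
  have finR: "\<And>N. finite (RR N p)" by (rule finite_subset[OF RR_sub_LL finite_LL])
  have subR: "\<And>N. RR N p \<subseteq> mzv_range p" by (auto simp: RR_def)
  have sm: "f summable_on mzv_range p"
  proof (rule nonneg_bdd_above_summable_on[OF nn])
    show "bdd_above (sum f ` {F. F \<subseteq> mzv_range p \<and> finite F})"
    proof (rule bdd_aboveI)
      fix y assume "y \<in> sum f ` {F. F \<subseteq> mzv_range p \<and> finite F}"
      then obtain F where F: "F \<subseteq> mzv_range p" "finite F" "y = sum f F" by auto
      obtain N where N: "F \<subseteq> RR N p" using cover_RR[OF F(2,1)] by blast
      have "sum f F \<le> sum f (RR N p)"
        by (rule sum_mono2[OF finR N]) (use nn subR in auto)
      also have "\<dots> = TT N Sr p" unfolding f_def TT_Sr_RR ..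
      also have "\<dots> \<le> (suminf (\<lambda>m. real m powr (-(1 + 1 / real (length p))))) ^ length p"
        by (rule TT_Sr_bound[OF False h2 pos])
      finally show "y \<le> (suminf (\<lambda>m. real m powr (-(1 + 1 / real (length p))))) ^ length p"
        using F by simp
    qed
  qed
  have "(\<lambda>N. sum f (RR N p)) \<longlonglongrightarrow> infsum f (mzv_range p)"
  proof (rule exhaust_limit[OF nn sm finR subR])
    show "\<And>N. RR N p \<subseteq> RR (Suc N) p" by (auto simp: RR_def)
    show "\<And>F. finite F \<Longrightarrow> F \<subseteq> mzv_range p \<Longrightarrow> \<exists>N. F \<subseteq> RR N p" by (rule cover_RR)
  qed
  then show ?thesis unfolding f_def TT_Sr_RR[symmetric] mzv_def .
qed




lemma tendsto_sum_list_map: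
  fixes f :: "nat \<Rightarrow> 'a \<Rightarrow> real"
  shows "(\<And>x. x \<in> set xs \<Longrightarrow> (\<lambda>N. f N x) \<longlonglongrightarrow> g x) \<Longrightarrow>
    (\<lambda>N. sum_list (map (f N) xs)) \<longlonglongrightarrow> sum_list (map g xs)"
  by (induct xs) (auto intro!: tendsto_add)

lemma zeta_limit:
  assumes "good ks"
  shows "(\<lambda>N. TT N Fh ks) \<longlonglongrightarrow> zeta_half ks"
proof -
  have "(\<lambda>N. sum_list (map (\<lambda>(p,s). (1/2)^s * TT N Sr p) (merges ks)))
     \<longlonglongrightarrow> sum_list (map (\<lambda>(p,s). (1/2)^s * mzv p) (merges ks))"
  proof (rule tendsto_sum_list_map)
    fix x assume x: "x \<in> set (merges ks)"
    obtain p s where xps: "x = (p,s)" by force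
    have "good p"
    proof (cases "ks = []")
      case True then show ?thesis using merges_props[of p s ks] x xps by (simp add: good_def)
    next
      case False
      then have "p \<noteq> [] \<and> hd ks \<le> hd p" and "(\<forall>x\<in>set ks. x \<ge> 1) \<longrightarrow> (\<forall>x\<in>set p. x \<ge> 1)"
        using merges_props[of p s ks] x xps by auto
      with assms False show ?thesis unfolding good_def by auto
    qed
    then show "(\<lambda>N. (\<lambda>(p,s). (1/2)^s * TT N Sr p) x) \<longlonglongrightarrow> (\<lambda>(p,s). (1/2)^s * mzv p) x"
      unfolding xps by (simp add: tendsto_mult_left mzv_limit)
  qed
  then show ?thesis unfolding merges_TT zeta_half_def zeta_t_def .
qed


lemma main_general:
  fixes n :: nat and f :: "nat \<Rightarrow> nat"
  assumes n: "n \<ge> 1" and f1: "f 1 \<ge> 2" and fn: "f n \<ge> 2" and fpos: "\<And>i. f i \<ge> 1"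
  shows "(\<Sum>k = 0..n. (-1) ^ k * zeta_half (map f [1..<k + 1]) * zeta_half (map f (rev [k + 1..<n + 1]))) = 0"
proof -
  define as where "as = map f [1..<n+1]"
  have las: "length as = n" by (simp add: as_def)
  have e1: "map f [1..<k + 1] = take k as" if "k \<le> n" for k
  proof -
    have "take k [1..<n+1] = [1..<1+k]" using that by (intro take_upt) simp
    then show ?thesis by (simp only: as_def take_map add.commute[of 1 k])
  qed
  have e2: "map f (rev [k + 1..<n + 1]) = rev (drop k as)" if "k \<le> n" for k
    using that by (simp add: as_def drop_map rev_map)
  have g1: "good (map f [1..<k + 1])" for k
  proof (cases k)
    case 0 then show ?thesis by (simp add: good_def)
  next
    case (Suc k')
    then have "[1..<k + 1] = 1 # [Suc 1..<k + 1]" by (intro upt_conv_Cons) simp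
    then have "hd (map f [1..<k + 1]) = f 1" by (simp only: list.map hd_Cons_tl list.sel(1))
    then show ?thesis using f1 fpos by (auto simp: good_def)
  qed
  have g2: "good (map f (rev [k + 1..<n + 1]))" if "k \<le> n" for k
  proof (cases "k = n")
    case True then show ?thesis by (simp add: good_def)
  next
    case False
    with that have kn: "k < n" by simp
    then have ne: "[k + 1..<n + 1] \<noteq> []" by simp
    have "hd (map f (rev [k + 1..<n + 1])) = f (last [k + 1..<n + 1])"
      using ne by (simp add: hd_map hd_rev)
    also have "last [k + 1..<n + 1] = n" using kn by (simp add: last_upt)
    finally show ?thesis using fn fpos by (auto simp: good_def)
  qed
  have lim: "(\<lambda>N. \<Sum>k = 0..n. (-1) ^ k * TT N Fh (map f [1..<k + 1]) * TT N Fh (map f (rev [k + 1..<n + 1])))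
      \<longlonglongrightarrow> (\<Sum>k = 0..n. (-1) ^ k * zeta_half (map f [1..<k + 1]) * zeta_half (map f (rev [k + 1..<n + 1])))"
  proof (rule tendsto_sum)
    fix k assume "k \<in> {0..n}"
    then have kn: "k \<le> n" by simp
    show "(\<lambda>N. (-1) ^ k * TT N Fh (map f [1..<k + 1]) * TT N Fh (map f (rev [k + 1..<n + 1])))
      \<longlonglongrightarrow> (-1) ^ k * zeta_half (map f [1..<k + 1]) * zeta_half (map f (rev [k + 1..<n + 1]))"
      by (intro tendsto_mult tendsto_const zeta_limit g1 g2[OF kn])
  qed
  have zero: "(\<Sum>k = 0..n. (-1) ^ k * TT N Fh (map f [1..<k + 1]) * TT N Fh (map f (rev [k + 1..<n + 1]))) = 0" for N
  proof -
    have "(\<Sum>k = 0..n. (-1) ^ k * TT N Fh (map f [1..<k + 1]) * TT N Fh (map f (rev [k + 1..<n + 1])))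
        = (\<Sum>k=0..n. (-1)^k * (TT N Fh (take k as) * TT N Fh (rev (drop k as))))"
    proof (rule sum.cong[OF refl])
      fix k assume "k \<in> {0..n}"
      then have kn: "k \<le> n" by simp
      show "(-1) ^ k * TT N Fh (map f [1..<k + 1]) * TT N Fh (map f (rev [k + 1..<n + 1]))
          = (-1)^k * (TT N Fh (take k as) * TT N Fh (rev (drop k as)))"
        by (simp only: e1[OF kn] e2[OF kn] mult.assoc)
    qed
    also have "\<dots> = 0" by (rule fin_main[OF las n])
    finally show ?thesis .
  qed
  from lim have "(\<lambda>N. 0::real) \<longlonglongrightarrow> (\<Sum>k = 0..n. (-1) ^ k * zeta_half (map f [1..<k + 1]) * zeta_half (map f (rev [k + 1..<n + 1])))"
    unfolding zero .
  from LIMSEQ_unique[OF tendsto_const this] show ?thesis by (rule sym)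
qed

theorem mainTheorem9:
  fixes n :: nat and j :: "nat \<Rightarrow> nat"
  assumes "n \<ge> 1" and "j 1 \<ge> 1" and "j n \<ge> 1"
  shows "(\<Sum>k = 0..n. (-1) ^ k
            * zeta_half (map (\<lambda>i. 2 * j i + 1) [1..<k + 1])
            * zeta_half (map (\<lambda>i. 2 * j i + 1) (rev [k + 1..<n + 1]))) = 0"
  by (rule main_general) (use assms in auto)



end
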